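(* In an instance with $N\subseteq C$, let $W$ be an outcome satisfying UPRF. Then for every $q\le k$: (1) $W$ is in the $\frac{5+\sqrt{33}}{2}$-$q$-core; (2) $W$ satisfies $3$-$q$-individual fairness if $k\le n$; (3) for every $\gamma>1$, $W$ is in the $\left(\gamma,\frac{5\gamma+1}{\gamma-1}\right)$-$q$-transferable core restricted to $\ell<2q$.
   Context: Let $(\mathcal X,d)$ be a metric space, $N=[n]$ a set of agents and $C$ a set of candidates located in $\mathcal X$, $k\in\mathbb N^+$; an outcome is $W\subseteq C$ with $|W|\le k$; $B(i,r)=\{x\in\mathcal X:d(i,x)\le r\}$; $d^q(i,W)$ is the distance from $i$ to its $q$-th closest point of $W$. UPRF: there are no $\ell\in\mathbb N$, no $N'\subseteq N$ with $|N'|\ge\ell n/k$, and no $y\in\mathbb R$ with $\max_{i,i'\in N'}d(i,i')\le y$ and $|\bigcup_{i\in N'}B(i,y)\cap W|<\ell$. $\alpha$-$q$-core: no $\ell\in\mathbb N$, $N'\subseteq N$ with $|N'|\ge\ell n/k$, and $C'\subseteq C$ with $q\le|C'|\le\ell$ such that $\alpha\,d^q(i,C')<d^q(i,W)$ for all $i\in N'$. $\beta$-$q$-individual fairness (for $N\subseteq C$, $k\le n$): $d^q(i,W)\le\beta\,r^q(i)$ for all $i\in N$, with $r^q(i)=\min\{r:|B(i,r)\cap N|\ge qn/k\}$. $(\gamma,\alpha)$-$q$-transferable core restricted to $\ell<2q$: no $\ell\in\mathbb N$ with $\ell<2q$, $N'\subseteq N$ with $|N'|\ge\gamma\ell n/k$,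 and $C'\subseteq C$ with $q\le|C'|\le\ell$ such that $\alpha\sum_{i\in N'}d^q(i,C')<\sum_{i\in N'}d^q(i,W)$. *)

theory Defs
  imports "HOL-Analysis.Analysis"
begin

(* Agents are indexed by {..<n}; agent i is located at loc i in the metric space (M,d).
   Candidates C are a finite subset of M.  Outcomes W are subsets of C. *)

(* d^q(x,W): q-th smallest distance from x to points of W (counting points of W
   with equal distance separately); +infinity if W has fewer than q points. *)
definition dq :: "('a \<Rightarrow> 'a \<Rightarrow> real) \<Rightarrow> nat \<Rightarrow> 'a \<Rightarrow> 'a set \<Rightarrow> ereal" where
  "dq d q x W = Inf {ereal r | r. q \<le> card {w \<in> W. d x w \<le> r}}"

definition outcome :: "'a set \<Rightarrow> nat \<Rightarrow> 'a set \<Rightarrow> bool" where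
  "outcome C k W \<longleftrightarrow> W \<subseteq> C \<and> card W \<le> k"

definition UPRF :: "('a \<Rightarrow> 'a \<Rightarrow> real) \<Rightarrow> 'a set \<Rightarrow> nat \<Rightarrow> (nat \<Rightarrow> 'a) \<Rightarrow> nat \<Rightarrow> 'a set \<Rightarrow> bool" where
  "UPRF d M n loc k W \<longleftrightarrow>
     \<not> (\<exists>(l::nat) N' (y::real). N' \<subseteq> {..<n} \<and> real (card N') \<ge> real l * real n / real k \<and>
          (\<forall>i\<in>N'. \<forall>i'\<in>N'. d (loc i) (loc i') \<le> y) \<and>
          card ((\<Union>i\<in>N'. {x \<in> M. d (loc i) x \<le> y}) \<inter> W) < l)"

definition in_q_core :: "('a \<Rightarrow> 'a \<Rightarrow> real) \<Rightarrow> nat \<Rightarrow> (nat \<Rightarrow> 'a) \<Rightarrow> nat \<Rightarrow> 'a set \<Rightarrow> real \<Rightarrow> nat \<Rightarrow> 'a set \<Rightarrow> bool" where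
  "in_q_core d n loc k C \<alpha> q W \<longleftrightarrow>
     \<not> (\<exists>(l::nat) N' C'. N' \<subseteq> {..<n} \<and> real (card N') \<ge> real l * real n / real k \<and>
          C' \<subseteq> C \<and> q \<le> card C' \<and> card C' \<le> l \<and>
          (\<forall>i\<in>N'. ereal \<alpha> * dq d q (loc i) C' < dq d q (loc i) W))"

definition rq :: "('a \<Rightarrow> 'a \<Rightarrow> real) \<Rightarrow> nat \<Rightarrow> (nat \<Rightarrow> 'a) \<Rightarrow> nat \<Rightarrow> nat \<Rightarrow> nat \<Rightarrow> real" where
  "rq d n loc k q i = Inf {r. real (card {j \<in> {..<n}. d (loc i) (loc j) \<le> r}) \<ge> real q * real n / real k}"

definition q_ind_fair :: "('a \<Rightarrow> 'a \<Rightarrow> real) \<Rightarrow> nat \<Rightarrow> (nat \<Rightarrow> 'a) \<Rightarrow> nat \<Rightarrow> real \<Rightarrow> nat \<Rightarrow> 'a set \<Rightarrow> bool" where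
  "q_ind_fair d n loc k \<beta> q W \<longleftrightarrow>
     (\<forall>i<n. dq d q (loc i) W \<le> ereal (\<beta> * rq d n loc k q i))"

definition in_q_tcore_restr :: "('a \<Rightarrow> 'a \<Rightarrow> real) \<Rightarrow> nat \<Rightarrow> (nat \<Rightarrow> 'a) \<Rightarrow> nat \<Rightarrow> 'a set \<Rightarrow> real \<Rightarrow> real \<Rightarrow> nat \<Rightarrow> 'a set \<Rightarrow> bool" where
  "in_q_tcore_restr d n loc k C \<gamma> \<alpha> q W \<longleftrightarrow>
     \<not> (\<exists>(l::nat) N' C'. l < 2 * q \<and> N' \<subseteq> {..<n} \<and> real (card N') \<ge> \<gamma> * real l * real n / real k \<and>
          C' \<subseteq> C \<and> q \<le> card C' \<and> card C' \<le> l \<and>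
          ereal \<alpha> * (\<Sum>i\<in>N'. dq d q (loc i) C') < (\<Sum>i\<in>N'. dq d q (loc i) W))"

end

theory Submission
  imports Defs
begin

lemma dq_le:
  assumes "finite W" "S \<subseteq> {w\<in>W. d x w \<le> r}" "q \<le> card S"
  shows "dq d q x W \<le> ereal r"
proof -
  have "card S \<le> card {w\<in>W. d x w \<le> r}"
    using assms by (intro card_mono) auto
  hence "q \<le> card {w\<in>W. d x w \<le> r}" using assms(3) by linarith
  thus ?thesis unfolding dq_def by (intro Inf_lower) auto
qed

lemma dq_attain:
  assumes "finite W" "1 \<le> q" "q \<le> card W" "\<And>w. 0 \<le> d x w"
  shows "\<exists>r. dq d q x W = ereal r \<and> q \<le> card {w\<in>W. d x w \<le> r} \<and> 0 \<le> r"
proof -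
  define D where "D = d x ` W"
  define R where "R = {r\<in>D. q \<le> card {w\<in>W. d x w \<le> r}}"
  have finD: "finite D" using assms D_def by auto
  have Wne: "W \<noteq> {}" using assms by auto
  have "Max D \<in> R"
  proof -
    have "{w\<in>W. d x w \<le> Max D} = W" using finD D_def by auto
    thus ?thesis using R_def finD Wne D_def assms(3) by auto
  qed
  hence Rne: "R \<noteq> {}" by auto
  have finR: "finite R" using finD R_def by auto
  define r0 where "r0 = Min R"
  have r0R: "r0 \<in> R" using Rne finR r0_def by auto
  have low: "r0 \<le> r" if "q \<le> card {w\<in>W. d x w \<le> r}" for r
  proof -
    define S where "S = {w\<in>W. d x w \<le> r}"
    have Sne: "S \<noteq> {}" using that assms(2) S_def by (metis card.empty not_one_le_zero le_trans)
    have finS: "finite S" using assms(1) S_def by auto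
    define r' where "r' = Max (d x ` S)"
    have r'le: "r' \<le> r" using finS Sne S_def r'_def by auto
    have r'D: "r' \<in> D" using finS Sne S_def r'_def D_def
      by (metis (no_types, lifting) Max_in finite_imageI image_is_empty image_mono mem_Collect_eq subsetD subsetI)
    have "S \<subseteq> {w\<in>W. d x w \<le> r'}" using finS S_def r'_def by auto
    hence "card S \<le> card {w\<in>W. d x w \<le> r'}" using assms(1) by (intro card_mono) auto
    hence "r' \<in> R" using R_def r'D that S_def by auto
    hence "r0 \<le> r'" using finR r0_def by auto
    thus ?thesis using r'le by linarith
  qed
  have "dq d q x W = ereal r0"
    unfolding dq_def
  proof (rule antisym)
    show "Inf {ereal r |r. q \<le> card {w \<in> W. d x w \<le> r}} \<le> ereal r0"
      using r0R R_def by (intro Inf_lower) auto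
    show "ereal r0 \<le> Inf {ereal r |r. q \<le> card {w \<in> W. d x w \<le> r}}"
      using low by (intro Inf_greatest) auto
  qed
  moreover have "0 \<le> r0" using r0R R_def D_def assms(4) by auto
  ultimately show ?thesis using r0R R_def by auto
qed

lemma dq_nonneg:
  assumes "1 \<le> q" "\<And>w. 0 \<le> d x w"
  shows "0 \<le> dq d q x W"
  unfolding dq_def
proof (rule Inf_greatest)
  fix z assume "z \<in> {ereal r |r. q \<le> card {w \<in> W. d x w \<le> r}}"
  then obtain r where r: "z = ereal r" "q \<le> card {w \<in> W. d x w \<le> r}" by auto
  hence "{w \<in> W. d x w \<le> r} \<noteq> {}" using assms(1) by (metis card.empty le_0_eq not_one_le_zero le_trans)
  then obtain w where "d x w \<le> r" by auto
  hence "0 \<le> r" using assms(2)[of w] by linarith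
  thus "0 \<le> z" using r by simp
qed

lemma UPRF_D:
  assumes "UPRF d M n loc k W" "N' \<subseteq> {..<n}" "real l * real n / real k \<le> real (card N')"
    "\<forall>i\<in>N'. \<forall>i'\<in>N'. d (loc i) (loc i') \<le> y"
  shows "l \<le> card ((\<Union>i\<in>N'. {x \<in> M. d (loc i) x \<le> y}) \<inter> W)"
  using assms unfolding UPRF_def by (meson not_le)

lemma part2:
  assumes ms: "Metric_space M d" and n1: "n \<ge> 1" and k1: "k \<ge> 1"
    and finC: "finite C" and CM: "C \<subseteq> M" and locC: "loc ` {..<n} \<subseteq> C"
    and W: "outcome C k W" and U: "UPRF d M n loc k W" and q: "q \<le> k" and q1: "1 \<le> q"
  shows "q_ind_fair d n loc k 3 q W"
  unfolding q_ind_fair_def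
proof (intro allI impI)
  fix i assume i: "i < n"
  have finW: "finite W" using W finC unfolding outcome_def by (auto intro: finite_subset)
  have locM: "loc j \<in> M" if "j < n" for j using that locC CM by auto
  define P where "P r = (real q * real n / real k \<le> real (card {j \<in> {..<n}. d (loc i) (loc j) \<le> r}))" for r
  have key: "dq d q (loc i) W \<le> ereal (3 * r)" if Pr: "P r" for r
  proof -
    define G where "G = {j \<in> {..<n}. d (loc i) (loc j) \<le> r}"
    have diam: "\<forall>j\<in>G. \<forall>j'\<in>G. d (loc j) (loc j') \<le> 2 * r"
    proof (intro ballI)
      fix j j' assume "j \<in> G" "j' \<in> G"
      hence "d (loc j) (loc j') \<le> d (loc j) (loc i) + d (loc i) (loc j')"
        using G_def i locM Metric_space.triangle[OF ms] by auto
      also have "\<dots> \<le> 2 * r" using \<open>j \<in> G\<close> \<open>j' \<in> G\<close> G_def Metric_space.commute[OF ms, of "loc j" "loc i"] by auto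
      finally show "d (loc j) (loc j') \<le> 2 * r" .
    qed
    have cq: "q \<le> card ((\<Union>j\<in>G. {x \<in> M. d (loc j) x \<le> 2 * r}) \<inter> W)"
      by (rule UPRF_D[OF U _ _ diam]) (use Pr in \<open>auto simp: P_def G_def\<close>)
    have sub: "(\<Union>j\<in>G. {x \<in> M. d (loc j) x \<le> 2 * r}) \<inter> W \<subseteq> {w\<in>W. d (loc i) w \<le> 3 * r}"
    proof
      fix w assume "w \<in> (\<Union>j\<in>G. {x \<in> M. d (loc j) x \<le> 2 * r}) \<inter> W"
      then obtain j where j: "j \<in> G" "w \<in> M" "d (loc j) w \<le> 2 * r" "w \<in> W" by auto
      have "d (loc i) w \<le> d (loc i) (loc j) + d (loc j) w"
        using j G_def i locM Metric_space.triangle[OF ms] by auto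
      also have "\<dots> \<le> 3 * r" using j G_def by auto
      finally show "w \<in> {w\<in>W. d (loc i) w \<le> 3 * r}" using j by auto
    qed
    show ?thesis by (rule dq_le[where d=d and x="loc i" and r="3*r", OF finW sub cq])
  qed
  define S where "S = {r. P r}"
  define R0 where "R0 = Max ((\<lambda>j. d (loc i) (loc j)) ` {..<n})"
  have "{j \<in> {..<n}. d (loc i) (loc j) \<le> R0} = {..<n}" unfolding R0_def by auto
  moreover have "real q * real n / real k \<le> real n"
  proof -
    have "real q * real n \<le> real k * real n" using q by (intro mult_right_mono) auto
    thus ?thesis using k1 by (simp add: field_simps)
  qed
  ultimately have "P R0" unfolding P_def by simp
  hence Sne: "S \<noteq> {}" using S_def by auto
  have "dq d q (loc i) W \<le> ereal (3 * R0)" using key \<open>P R0\<close> by blast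
  then obtain x where x: "dq d q (loc i) W = ereal x"
    using dq_nonneg[OF q1, of d "loc i" W] Metric_space.nonneg[OF ms]
    by (cases "dq d q (loc i) W") auto
  have "x / 3 \<le> Inf S"
  proof (rule cInf_greatest[OF Sne])
    fix s assume "s \<in> S"
    hence "ereal x \<le> ereal (3 * s)" using key S_def x by auto
    thus "x / 3 \<le> s" by simp
  qed
  hence "x \<le> 3 * Inf S" by simp
  moreover have "rq d n loc k q i = Inf S" unfolding rq_def S_def P_def by simp
  ultimately show "dq d q (loc i) W \<le> ereal (3 * rq d n loc k q i)" using x by simp
qed

lemma card_filter_sum:
  assumes "finite A"
  shows "card {x\<in>A. P x} = (\<Sum>x\<in>A. if P x then 1 else 0 :: nat)"
  using assms by (simp add: sum.If_cases Int_def conj_commute)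

lemma part1:
  assumes ms: "Metric_space M d" and n1: "n \<ge> 1" and k1: "k \<ge> 1"
    and finC: "finite C" and CM: "C \<subseteq> M" and locC: "loc ` {..<n} \<subseteq> C"
    and W: "outcome C k W" and U: "UPRF d M n loc k W" and q1: "1 \<le> q"
  shows "in_q_core d n loc k C ((5 + sqrt 33) / 2) q W"
proof -
  define \<alpha> where "\<alpha> = (5 + sqrt 33) / 2"
  have "sqrt 9 < sqrt 33" by (subst real_sqrt_less_iff) simp
  moreover have "sqrt 9 = 3" by (simp add: real_sqrt_unique)
  ultimately have s3: "3 < sqrt 33" by simp
  have \<alpha>4: "\<alpha> > 4" unfolding \<alpha>_def using s3 by (simp add: field_simps)
  have finW: "finite W" using W finC unfolding outcome_def by (auto intro: finite_subset)
  have locM: "loc j \<in> M" if "j < n" for j using that locC CM by auto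
  have nn: "\<And>x y. 0 \<le> d x y" using Metric_space.nonneg[OF ms] by blast
  have qnk: "real q * real n / real k > 0" using q1 n1 k1 by simp
  {
    fix l N' C'
    assume N': "N' \<subseteq> {..<n}" and cN: "real l * real n / real k \<le> real (card N')"
      and C': "C' \<subseteq> C" "q \<le> card C'" "card C' \<le> l"
      and viol: "\<forall>i\<in>N'. ereal \<alpha> * dq d q (loc i) C' < dq d q (loc i) W"
    have finC': "finite C'" using C' finC by (auto intro: finite_subset)
    have finN': "finite N'" using N' by (auto intro: finite_subset)
    have "\<forall>i\<in>N'. \<exists>r. dq d q (loc i) C' = ereal r \<and> q \<le> card {c\<in>C'. d (loc i) c \<le> r} \<and> 0 \<le> r"
      using dq_attain[OF finC' q1 C'(2)] nn by blast
    then obtain r where r: "\<And>i. i\<in>N' \<Longrightarrow> dq d q (loc i) C' = ereal (r i) \<and> q \<le> card {c\<in>C'. d (loc i) c \<le> r i} \<and> 0 \<le> r i"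
      by metis
    define S where "S c = {i\<in>N'. d (loc i) c \<le> r i}" for c
    have "(\<Sum>c\<in>C'. card (S c)) = (\<Sum>c\<in>C'. \<Sum>i\<in>N'. if d (loc i) c \<le> r i then 1 else 0)"
      unfolding S_def using finN' by (simp add: card_filter_sum)
    also have "\<dots> = (\<Sum>i\<in>N'. \<Sum>c\<in>C'. if d (loc i) c \<le> r i then 1 else 0)"
      by (rule sum.swap)
    also have "\<dots> = (\<Sum>i\<in>N'. card {c\<in>C'. d (loc i) c \<le> r i})"
      using finC' by (simp add: card_filter_sum)
    finally have sumeq: "(\<Sum>c\<in>C'. card (S c)) = (\<Sum>i\<in>N'. card {c\<in>C'. d (loc i) c \<le> r i})" .
    have "card N' * q \<le> (\<Sum>i\<in>N'. card {c\<in>C'. d (loc i) c \<le> r i})"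
      using sum_bounded_below[of N' q "\<lambda>i. card {c\<in>C'. d (loc i) c \<le> r i}"] r by auto
    hence low: "real (card N') * real q \<le> (\<Sum>c\<in>C'. real (card (S c)))"
      using sumeq by (metis of_nat_le_iff of_nat_mult of_nat_sum)
    obtain c where c: "c \<in> C'" "real q * real n / real k \<le> real (card (S c))"
    proof (rule ccontr)
      assume "\<not> thesis"
      hence lt: "\<forall>c\<in>C'. real (card (S c)) < real q * real n / real k" using that by force
      have C'ne: "C' \<noteq> {}" using C'(2) q1 by auto
      have "(\<Sum>c\<in>C'. real (card (S c))) < (\<Sum>c\<in>C'. real q * real n / real k)"
        using lt finC' C'ne by (intro sum_strict_mono) auto
      also have "\<dots> = real (card C') * (real q * real n / real k)" by simp
      also have "\<dots> \<le> real l * (real q * real n / real k)"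
        using C'(3) qnk by (intro mult_right_mono) auto
      also have "\<dots> = real q * (real l * real n / real k)" by simp
      also have "\<dots> \<le> real q * real (card N')" using cN by (intro mult_left_mono) auto
      finally show False using low by (simp add: mult.commute)
    qed
    have finS: "finite (S c)" using finN' S_def by auto
    have Sne: "S c \<noteq> {}" using c qnk by (metis card.empty of_nat_0 not_le)
    define R where "R = Max (r ` S c)"
    obtain m0 where m0: "m0 \<in> S c" "r m0 = R" using finS Sne R_def
      by (metis (no_types, lifting) Max_in finite_imageI image_iff image_is_empty)
    have rR: "r j \<le> R" if "j \<in> S c" for j using that finS R_def by auto
    have SN: "S c \<subseteq> N'" using S_def by auto
    have cM: "c \<in> M" using c C' CM by auto
    have diam: "\<forall>j\<in>S c. \<forall>j'\<in>S c. d (loc j) (loc j') \<le> 2 * R"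
    proof (intro ballI)
      fix j j' assume jj: "j \<in> S c" "j' \<in> S c"
      hence "d (loc j) (loc j') \<le> d (loc j) c + d c (loc j')"
        using SN N' locM cM Metric_space.triangle[OF ms] by (meson lessThan_iff subsetD)
      also have "\<dots> = d (loc j) c + d (loc j') c" using Metric_space.commute[OF ms] by metis
      also have "\<dots> \<le> r j + r j'" using jj S_def by auto
      also have "\<dots> \<le> 2 * R" using rR[OF jj(1)] rR[OF jj(2)] by linarith
      finally show "d (loc j) (loc j') \<le> 2 * R" .
    qed
    have cq: "q \<le> card ((\<Union>j\<in>S c. {x \<in> M. d (loc j) x \<le> 2 * R}) \<inter> W)"
      by (rule UPRF_D[OF U _ _ diam]) (use c SN N' in auto)
    have sub: "(\<Union>j\<in>S c. {x \<in> M. d (loc j) x \<le> 2 * R}) \<inter> W \<subseteq> {w\<in>W. d (loc m0) w \<le> 4 * R}"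
    proof
      fix w assume "w \<in> (\<Union>j\<in>S c. {x \<in> M. d (loc j) x \<le> 2 * R}) \<inter> W"
      then obtain j where j: "j \<in> S c" "w \<in> M" "d (loc j) w \<le> 2 * R" "w \<in> W" by auto
      have "d (loc m0) w \<le> d (loc m0) (loc j) + d (loc j) w"
        using j m0 SN N' locM Metric_space.triangle[OF ms] by (meson lessThan_iff subsetD)
      also have "\<dots> \<le> 4 * R" using j m0 diam by fastforce
      finally show "w \<in> {w\<in>W. d (loc m0) w \<le> 4 * R}" using j by auto
    qed
    have "dq d q (loc m0) W \<le> ereal (4 * R)"
      by (rule dq_le[where d=d and x="loc m0" and r="4*R", OF finW sub cq])
    moreover have "ereal \<alpha> * dq d q (loc m0) C' < dq d q (loc m0) W" using viol m0 SN by auto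
    moreover have "dq d q (loc m0) C' = ereal R" "0 \<le> R" using r m0 SN by auto
    ultimately have "ereal (\<alpha> * R) < ereal (4 * R)" by (metis less_le_trans times_ereal.simps(1))
    hence "\<alpha> * R < 4 * R" by simp
    moreover have "4 * R \<le> \<alpha> * R" using \<alpha>4 \<open>0 \<le> R\<close> by (intro mult_right_mono) auto
    ultimately have False by linarith
  }
  thus ?thesis unfolding in_q_core_def \<alpha>_def[symmetric] by blast
qed

lemma part3:
  assumes ms: "Metric_space M d" and n1: "n \<ge> 1" and k1: "k \<ge> 1"
    and finC: "finite C" and CM: "C \<subseteq> M" and locC: "loc ` {..<n} \<subseteq> C"
    and W: "outcome C k W" and U: "UPRF d M n loc k W" and q1: "1 \<le> q" and g: "\<gamma> > 1"
  shows "in_q_tcore_restr d n loc k C \<gamma> ((5 * \<gamma> + 1) / (\<gamma> - 1)) q W"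
proof -
  define \<alpha> where "\<alpha> = (5 * \<gamma> + 1) / (\<gamma> - 1)"
  have finW: "finite W" using W finC unfolding outcome_def by (auto intro: finite_subset)
  have locM: "loc j \<in> M" if "j < n" for j using that locC CM by auto
  have nn: "\<And>x y. 0 \<le> d x y" using Metric_space.nonneg[OF ms] by blast
  have qnk: "real q * real n / real k > 0" using q1 n1 k1 by simp
  {
    fix l N' C'
    assume l: "l < 2 * q" and N': "N' \<subseteq> {..<n}" and cN: "\<gamma> * real l * real n / real k \<le> real (card N')"
      and C': "C' \<subseteq> C" "q \<le> card C'" "card C' \<le> l"
      and viol: "ereal \<alpha> * (\<Sum>i\<in>N'. dq d q (loc i) C') < (\<Sum>i\<in>N'. dq d q (loc i) W)"
    have finC': "finite C'" using C' finC by (auto intro: finite_subset)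
    have finN': "finite N'" using N' by (auto intro: finite_subset)
    have "\<forall>i\<in>N'. \<exists>r. dq d q (loc i) C' = ereal r \<and> q \<le> card {c\<in>C'. d (loc i) c \<le> r} \<and> 0 \<le> r"
      using dq_attain[OF finC' q1 C'(2)] nn by blast
    then obtain r where r: "\<And>i. i\<in>N' \<Longrightarrow> dq d q (loc i) C' = ereal (r i) \<and> q \<le> card {c\<in>C'. d (loc i) c \<le> r i} \<and> 0 \<le> r i"
      by metis
    define m where "m = card N'"
    have lq: "q \<le> l" using C' by linarith
    have qm: "real q * real n / real k \<le> real m / \<gamma>"
    proof -
      have "real q * real n / real k \<le> real l * real n / real k"
        using lq by (intro divide_right_mono mult_right_mono) auto
      also have "\<dots> = (\<gamma> * real l * real n / real k) / \<gamma>" using g by simp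
      also have "\<dots> \<le> real m / \<gamma>" using cN g m_def by (intro divide_right_mono) auto
      finally show ?thesis .
    qed
    have "0 < real m / \<gamma>" using qm qnk by linarith
    hence mpos: "real m > 0" using g by (simp add: zero_less_divide_iff)
    have mg: "real m / \<gamma> \<le> real m" using g mpos by (simp add: field_simps)
    have N'ne: "N' \<noteq> {}" using m_def mpos by auto
    define P where "P t = (real q * real n / real k \<le> real (card {i\<in>N'. r i \<le> t}))" for t
    define T where "T = {x \<in> r ` N'. P x}"
    have finT: "finite T" using finN' T_def by auto
    have "Max (r ` N') \<in> T"
    proof -
      have "{i\<in>N'. r i \<le> Max (r ` N')} = N'" using finN' by auto
      hence "P (Max (r ` N'))" unfolding P_def using qm mg m_def by simp
      moreover have "Max (r ` N') \<in> r ` N'" using finN' N'ne by (intro Max_in) auto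
      ultimately show ?thesis unfolding T_def by simp
    qed
    hence Tne: "T \<noteq> {}" by auto
    define t where "t = Min T"
    have tT: "t \<in> T" using finT Tne t_def by auto
    hence Pt: "P t" and tN: "t \<in> r ` N'" using T_def by auto
    have t0: "0 \<le> t" using tN r by auto
    have lt: "real (card {i\<in>N'. r i < t}) < real q * real n / real k"
    proof (rule ccontr)
      assume "\<not> ?thesis"
      hence ge: "real q * real n / real k \<le> real (card {i\<in>N'. r i < t})" by simp
      define A where "A = {i\<in>N'. r i < t}"
      have finA: "finite A" using finN' A_def by auto
      have Ane: "A \<noteq> {}" using ge qnk A_def by (metis card.empty of_nat_0 not_le)
      define t2 where "t2 = Max (r ` A)"
      have t2A: "t2 \<in> r ` A" using finA Ane t2_def by auto
      hence t2lt: "t2 < t" and t2N: "t2 \<in> r ` N'" using A_def by auto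
      have "A \<subseteq> {i\<in>N'. r i \<le> t2}" using finA t2_def A_def by auto
      hence "card A \<le> card {i\<in>N'. r i \<le> t2}" using finN' by (intro card_mono) auto
      hence "P t2" using ge A_def P_def by auto
      hence "t2 \<in> T" using t2N T_def by auto
      hence "t \<le> t2" using finT t_def by auto
      thus False using t2lt by linarith
    qed
    define G where "G = {i\<in>N'. r i \<le> t}"
    have pair: "d (loc i) (loc j) \<le> r i + r j" if ij: "i \<in> N'" "j \<in> N'" for i j
    proof -
      define Ai where "Ai = {c\<in>C'. d (loc i) c \<le> r i}"
      define Aj where "Aj = {c\<in>C'. d (loc j) c \<le> r j}"
      have "card (Ai \<union> Aj) + card (Ai \<inter> Aj) = card Ai + card Aj"
        using finC' Ai_def Aj_def card_Un_Int[of Ai Aj] by auto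
      moreover have "card (Ai \<union> Aj) \<le> card C'" using finC' Ai_def Aj_def by (intro card_mono) auto
      moreover have "q \<le> card Ai" "q \<le> card Aj" using r ij Ai_def Aj_def by auto
      ultimately have "card (Ai \<inter> Aj) > 0" using C'(3) l by linarith
      then obtain c where c: "c \<in> Ai" "c \<in> Aj" by (metis card.empty disjoint_iff less_irrefl)
      have cM: "c \<in> M" using c Ai_def C' CM by auto
      have "d (loc i) (loc j) \<le> d (loc i) c + d c (loc j)"
        using ij N' locM cM Metric_space.triangle[OF ms] by (meson lessThan_iff subsetD)
      also have "\<dots> = d (loc i) c + d (loc j) c" using Metric_space.commute[OF ms] by metis
      also have "\<dots> \<le> r i + r j" using c Ai_def Aj_def by auto
      finally show ?thesis .
    qed
    have diam: "\<forall>j\<in>G. \<forall>j'\<in>G. d (loc j) (loc j') \<le> 2 * t"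
    proof (intro ballI)
      fix j j' assume jj: "j \<in> G" "j' \<in> G"
      hence "d (loc j) (loc j') \<le> r j + r j'" using pair G_def by auto
      also have "\<dots> \<le> 2 * t" using jj G_def by auto
      finally show "d (loc j) (loc j') \<le> 2 * t" .
    qed
    have GN: "G \<subseteq> N'" using G_def by auto
    have cq: "q \<le> card ((\<Union>j\<in>G. {x \<in> M. d (loc j) x \<le> 2 * t}) \<inter> W)"
      by (rule UPRF_D[OF U _ _ diam]) (use Pt GN N' in \<open>auto simp: P_def G_def\<close>)
    have bound: "dq d q (loc i) W \<le> ereal (r i + 3 * t)" if i: "i \<in> N'" for i
    proof -
      have sub: "(\<Union>j\<in>G. {x \<in> M. d (loc j) x \<le> 2 * t}) \<inter> W \<subseteq> {w\<in>W. d (loc i) w \<le> r i + 3 * t}"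
      proof
        fix w assume "w \<in> (\<Union>j\<in>G. {x \<in> M. d (loc j) x \<le> 2 * t}) \<inter> W"
        then obtain j where j: "j \<in> G" "w \<in> M" "d (loc j) w \<le> 2 * t" "w \<in> W" by auto
        have "d (loc i) w \<le> d (loc i) (loc j) + d (loc j) w"
          using i j GN N' locM Metric_space.triangle[OF ms] by (meson lessThan_iff subsetD)
        also have "\<dots> \<le> r i + r j + 2 * t" using pair[OF i] j GN by force
        also have "\<dots> \<le> r i + 3 * t" using j G_def by auto
        finally show "w \<in> {w\<in>W. d (loc i) w \<le> r i + 3 * t}" using j by auto
      qed
      show ?thesis by (rule dq_le[where d=d and x="loc i" and r="r i + 3 * t", OF finW sub cq])
    qed
    define X where "X = (\<Sum>i\<in>N'. r i)"
    have X0: "0 \<le> X" unfolding X_def using r by (intro sum_nonneg) auto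
    have "(\<Sum>i\<in>N'. dq d q (loc i) C') = (\<Sum>i\<in>N'. ereal (r i))"
      using r by (intro sum.cong) auto
    hence sumC: "(\<Sum>i\<in>N'. dq d q (loc i) C') = ereal X" unfolding X_def by simp
    have "(\<Sum>i\<in>N'. dq d q (loc i) W) \<le> (\<Sum>i\<in>N'. ereal (r i + 3 * t))"
      using bound by (intro sum_mono) auto
    also have "\<dots> = ereal (X + real m * (3 * t))" using X_def m_def by (simp add: sum.distrib)
    finally have sumW: "(\<Sum>i\<in>N'. dq d q (loc i) W) \<le> ereal (X + real m * (3 * t))" .
    define B where "B = {i\<in>N'. t \<le> r i}"
    have "card B + card {i\<in>N'. r i < t} = m"
    proof -
      have "B \<union> {i\<in>N'. r i < t} = N'" "B \<inter> {i\<in>N'. r i < t} = {}" using B_def by auto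
      thus ?thesis using card_Un_disjoint[of B "{i\<in>N'. r i < t}"] finN' B_def m_def
        by (metis (no_types, lifting) finite_Un)
    qed
    hence cB: "real m - real m / \<gamma> \<le> real (card B)" using lt qm by linarith
    have "real (card B) * t \<le> (\<Sum>i\<in>B. r i)" using sum_bounded_below[of B t r] B_def by auto
    also have "\<dots> \<le> X" unfolding X_def using r finN' B_def by (intro sum_mono2) auto
    finally have "real (card B) * t \<le> X" .
    moreover have "(real m - real m / \<gamma>) * t \<le> real (card B) * t" using cB t0 by (intro mult_right_mono)
    ultimately have k1': "(real m - real m / \<gamma>) * t \<le> X" by linarith
    have "(real m - real m / \<gamma>) * t * \<gamma> = real m * t * (\<gamma> - 1)" using g by (simp add: field_simps)
    moreover have "(real m - real m / \<gamma>) * t * \<gamma> \<le> X * \<gamma>"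
      using k1' g by (intro mult_right_mono) auto
    ultimately have k2: "real m * t * (\<gamma> - 1) \<le> X * \<gamma>" by linarith
    have "(X + real m * (3 * t)) * (\<gamma> - 1) = X * (\<gamma> - 1) + 3 * (real m * t * (\<gamma> - 1))"
      by (simp add: algebra_simps)
    also have "\<dots> \<le> X * (\<gamma> - 1) + 3 * (X * \<gamma>)" using k2 by linarith
    also have "\<dots> \<le> (5 * \<gamma> + 1) * X" using X0 g by (simp add: algebra_simps)
    finally have "(X + real m * (3 * t)) * (\<gamma> - 1) \<le> (5 * \<gamma> + 1) * X" .
    hence "X + real m * (3 * t) \<le> \<alpha> * X" unfolding \<alpha>_def using g by (simp add: field_simps)
    hence "(\<Sum>i\<in>N'. dq d q (loc i) W) \<le> ereal \<alpha> * (\<Sum>i\<in>N'. dq d q (loc i) C')"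
      using sumW sumC by (simp add: order_trans)
    hence False using viol by simp
  }
  thus ?thesis unfolding in_q_tcore_restr_def \<alpha>_def[symmetric] by blast
qed

theorem theorem11:
  fixes M :: "'a set" and d :: "'a \<Rightarrow> 'a \<Rightarrow> real"
    and n k :: nat and loc :: "nat \<Rightarrow> 'a" and C W :: "'a set"
  assumes "Metric_space M d"
    and "n \<ge> 1" and "k \<ge> 1"
    and "finite C" and "C \<subseteq> M"
    and "loc ` {..<n} \<subseteq> C"
    and "outcome C k W"
    and "UPRF d M n loc k W"
  shows "\<forall>q. 1 \<le> q \<and> q \<le> k \<longrightarrow>
           in_q_core d n loc k C ((5 + sqrt 33) / 2) q W
         \<and> (k \<le> n \<longrightarrow> q_ind_fair d n loc k 3 q W)
         \<and> (\<forall>\<gamma>::real. \<gamma> > 1 \<longrightarrow> in_q_tcore_restr d n loc k C \<gamma> ((5 * \<gamma> + 1) / (\<gamma> - 1)) q W)"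
  using part1[OF assms] part2[OF assms] part3[OF assms] by blast

end
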